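(* Let $N\ge 1$ patches, indexed $I=1,\dots,N$, be equispaced with macroscale spacing $H>0$ on an $L$-periodic domain, $L=NH$. Each patch carries $n\ge1$ interior lattice points with microscale spacing $d>0$, so the patch width is $h=nd=rH$ with $0<r\le 1$, and the left-next-to-edge point of patch $I$ is at $x^I_1=x^1_1+(I-1)H$. The interior values $u^I_i(t)\in\mathbb{R}$, $i=1,\dots,n$, evolve by $$d^2\partial_t u^I_i=\kappa^I_{i+\frac12}(u^I_{i+1}-u^I_i)+\kappa^I_{i-\frac12}(u^I_{i-1}-u^I_i),\qquad i=1,\dots,n,$$ with real diffusivities $\kappa^I_{i\pm1/2}$ satisfying $\kappa^I_{1/2}=\kappa^J_{n+1/2}$ for all patches $I,J$. The edge values are defined by spectral interpolation $$u^I_{n+1}=\sum_{J=1}^N \mathcal I^{IJ}_{n1}u^J_1,\quad \mathcal I^{IJ}_{n1}=\frac1N\sum_{k\in\mathcal K}e^{\mathrm{i}kH(I-J+r)},\qquad u^I_{0}=\sum_{J=1}^N \mathcal I^{IJ}_{1n}u^J_n,\quad \mathcal I^{IJ}_{1n}=\frac1N\sum_{k\in\mathcal K}e^{\mathrm{i}kH(I-J-r)},$$ where $\mathcal K$ is a fixed finite set of integer multiples of $2\pi/L$ that is symmetric ($k\in\mathcal K\Rightarrow -k\in\mathcal K$). Then all $\mathcal I^{IJ}_{n1},\mathcal I^{IJ}_{1n}$ are real, $\mathcal I^{IJ}_{1n}=\mathcal I^{JI}_{n1}$ for all $I,J$, and the resulting linear system $\partial_t\mathbf u=\mathcal L\mathbf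 u$ for $\mathbf u=(u^1_1,\dots,u^1_n,\dots,u^N_1,\dots,u^N_n)\in\mathbb R^{nN}$ has a real symmetric (hence self-adjoint) matrix $\mathcal L$.
   Context: This is the "self-adjoint patch scheme" for 1D heterogeneous lattice diffusion: each patch's edge values $u^I_0$ and $u^I_{n+1}$ are not dynamic variables but are set by interpolating from the next-to-edge values of (possibly all) patches, with the left edge interpolated from the right-next-to-edge values $u^J_n$ and the right edge from the left-next-to-edge values $u^J_1$. Here $\mathrm i=\sqrt{-1}$. A real square matrix is self-adjoint (for the standard inner product) iff it is symmetric. *)

theory Defs
  imports Complex_Main
begin

text \<open>Diffusivities: kap I j = kappa^I_(j - 1/2), for j = 1..n+1.\<close>

definition interp_n1 :: "nat \<Rightarrow> real \<Rightarrow> real \<Rightarrow> real set \<Rightarrow> nat \<Rightarrow> nat \<Rightarrow> complex" where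
  "interp_n1 N H r K I J =
     (1 / of_nat N) * (\<Sum>k\<in>K. exp (\<i> * complex_of_real (k * H * (real I - real J + r))))"

definition interp_1n :: "nat \<Rightarrow> real \<Rightarrow> real \<Rightarrow> real set \<Rightarrow> nat \<Rightarrow> nat \<Rightarrow> complex" where
  "interp_1n N H r K I J =
     (1 / of_nat N) * (\<Sum>k\<in>K. exp (\<i> * complex_of_real (k * H * (real I - real J - r))))"

definition patch_val ::
  "nat \<Rightarrow> nat \<Rightarrow> real \<Rightarrow> real \<Rightarrow> real set \<Rightarrow> (nat \<times> nat \<Rightarrow> real) \<Rightarrow> nat \<Rightarrow> nat \<Rightarrow> complex" where
  "patch_val N n H r K u I j =
     (if j = 0 then (\<Sum>J=1..N. interp_1n N H r K I J * complex_of_real (u (J, n)))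
      else if j = n + 1 then (\<Sum>J=1..N. interp_n1 N H r K I J * complex_of_real (u (J, 1)))
      else complex_of_real (u (I, j)))"

definition patch_rhs ::
  "nat \<Rightarrow> nat \<Rightarrow> real \<Rightarrow> real \<Rightarrow> real \<Rightarrow> real set \<Rightarrow> (nat \<Rightarrow> nat \<Rightarrow> real)
   \<Rightarrow> (nat \<times> nat \<Rightarrow> real) \<Rightarrow> nat \<times> nat \<Rightarrow> complex" where
  "patch_rhs N n d H r K kap u p =
     (let I = fst p; i = snd p; v = patch_val N n H r K u I in
      (1 / complex_of_real (d\<^sup>2)) *
        (complex_of_real (kap I (i + 1)) * (v (i + 1) - v i)
         + complex_of_real (kap I i) * (v (i - 1) - v i)))"

definition patch_idx :: "nat \<Rightarrow> nat \<Rightarrow> (nat \<times> nat) set" where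
  "patch_idx N n = {1..N} \<times> {1..n}"

end

theory Submission
  imports Defs
begin

lemma sym_sum:
  assumes "\<forall>k\<in>K. - k \<in> K"
  shows "(\<Sum>k\<in>K. f (- k)) = (\<Sum>k\<in>(K::real set). f k)"
proof -
  have e: "uminus ` K = K"
  proof
    show "uminus ` K \<subseteq> K" using assms by auto
    show "K \<subseteq> uminus ` K" using assms by (auto intro: image_eqI[where x="- _"])
  qed
  have "(\<Sum>k\<in>uminus ` K. f k) = (\<Sum>k\<in>K. f (- k))"
    by (subst sum.reindex) (auto simp: inj_on_def)
  then show ?thesis using e by simp
qed

lemma Im_sum_exp:
  assumes "\<forall>k\<in>K. - k \<in> K"
  shows "Im (\<Sum>k\<in>K. exp (\<i> * complex_of_real (k * c))) = 0"
proof -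
  have "Im (\<Sum>k\<in>K. exp (\<i> * complex_of_real (k * c))) = (\<Sum>k\<in>K. sin (k*c))"
    by (simp add: Im_exp)
  moreover have "(\<Sum>k\<in>K. sin (k*c)) = (\<Sum>k\<in>K. sin (-k*c))"
    using sym_sum[OF assms, of "\<lambda>k. sin (k*c)"] by simp
  moreover have "(\<Sum>k\<in>K. sin (-k*c)) = - (\<Sum>k\<in>K. sin (k*c))"
    by (simp add: sum_negf)
  ultimately show ?thesis by linarith
qed

lemma interp_props:
  assumes "\<forall>k\<in>K. - k \<in> K"
  shows "Im (interp_n1 N H r K I J) = 0" "Im (interp_1n N H r K I J) = 0"
    "interp_1n N H r K I J = interp_n1 N H r K J I"
proof -
  show "Im (interp_n1 N H r K I J) = 0"
    using Im_sum_exp[OF assms, of "H * (real I - real J + r)"]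
    unfolding interp_n1_def by (simp add: mult.assoc)
  show "Im (interp_1n N H r K I J) = 0"
    using Im_sum_exp[OF assms, of "H * (real I - real J - r)"]
    unfolding interp_1n_def by (simp add: mult.assoc)
  have "(\<Sum>k\<in>K. exp (\<i> * complex_of_real (k * H * (real J - real I + r))))
      = (\<Sum>k\<in>K. exp (\<i> * complex_of_real ((-k) * H * (real J - real I + r))))"
    using sym_sum[OF assms, of "\<lambda>k. exp (\<i> * complex_of_real (k * H * (real J - real I + r)))"] by simp
  also have "\<dots> = (\<Sum>k\<in>K. exp (\<i> * complex_of_real (k * H * (real I - real J - r))))"
    by (rule sum.cong) (auto simp: algebra_simps)
  finally show "interp_1n N H r K I J = interp_n1 N H r K J I"
    unfolding interp_1n_def interp_n1_def by simp
qed

lemma sum_prod: "(\<Sum>q\<in>A\<times>B. g q) = (\<Sum>J\<in>A. \<Sum>j\<in>B. g (J,j))"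
  by (simp add: sum.cartesian_product)

lemma t1: "finite A \<Longrightarrow> finite B \<Longrightarrow> 
  (\<Sum>q\<in>A\<times>B. (case q of (J,j) \<Rightarrow> if J = I \<and> j = a then c else 0) * u q) = (if I\<in>A \<and> a\<in>B then c * u (I,a) else (0::real))"
proof -
  assume f: "finite A" "finite B"
  have "(\<Sum>J\<in>A. \<Sum>j\<in>B. (case (J,j) of (J,j) \<Rightarrow> if J = I \<and> j = a then c else 0) * u (J,j))
     = (\<Sum>J\<in>A. if J = I then (if a \<in> B then c * u (I,a) else 0) else 0)"
    using f by (intro sum.cong refl) (simp add: if_distrib[of "\<lambda>x. x * _"] sum.delta' cong: if_cong)
  also have "\<dots> = (if I\<in>A \<and> a\<in>B then c * u (I,a) else (0::real))"
    using f by (simp add: sum.delta')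
  finally show ?thesis by (simp only: sum_prod)
qed

lemma t4: "finite A \<Longrightarrow> finite B \<Longrightarrow> 
  (\<Sum>q\<in>A\<times>B. (case q of (J,j) \<Rightarrow> if P \<and> j = a then f J else 0) * u q) = (if P \<and> a\<in>B then (\<Sum>J\<in>A. f J * u (J,a)) else (0::real))"
  unfolding sum_prod by (cases P) (simp_all add: if_distrib[of "\<lambda>x. x * _"] sum.delta' cong: if_cong)


lemma part2:
  fixes N n :: nat and d :: real and A :: "nat \<Rightarrow> nat \<Rightarrow> real" and kap :: "nat \<Rightarrow> nat \<Rightarrow> real"
  assumes n1: "n \<ge> 1" and d: "d > 0"
    and kk: "\<forall>I\<in>{1..N}. \<forall>J\<in>{1..N}. kap I 1 = kap J (n + 1)"
    and An1: "\<And>I J. interp_n1 N H r K I J = complex_of_real (A I J)"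
    and A1n: "\<And>I J. interp_1n N H r K I J = complex_of_real (A J I)"
  shows "\<exists>M :: nat \<times> nat \<Rightarrow> nat \<times> nat \<Rightarrow> real.
            (\<forall>p\<in>patch_idx N n. \<forall>q\<in>patch_idx N n. M p q = M q p) \<and>
            (\<forall>u p. p \<in> patch_idx N n \<longrightarrow>
               patch_rhs N n d H r K kap u p
                 = complex_of_real (\<Sum>q\<in>patch_idx N n. M p q * u q))"
proof -
  define m1 where "m1 I i q = (case q of (J,j) \<Rightarrow> if J = I \<and> j = i+1 then kap I (i+1) else 0)" for I i q
  define m2 where "m2 I i q = (case q of (J,j) \<Rightarrow> if J = I \<and> j = i-1 then kap I i else 0)" for I i q
  define m3 where "m3 I i q = (case q of (J,j) \<Rightarrow> if J = I \<and> j = i then kap I (i+1) + kap I i else 0)" for I i q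
  define m4 where "m4 I i q = (case q of (J::nat,j::nat) \<Rightarrow> if i = n \<and> j = 1 then kap I (n+1) * A I J else 0)" for I i q
  define m5 where "m5 I i q = (case q of (J::nat,j::nat) \<Rightarrow> if i = (1::nat) \<and> j = n then kap I 1 * A J I else 0)" for I i q
  define M where "M p q = (case p of (I,i) \<Rightarrow> (m1 I i q + m2 I i q - m3 I i q + m4 I i q + m5 I i q) / d\<^sup>2)" for p q
  have sym: "\<forall>p\<in>patch_idx N n. \<forall>q\<in>patch_idx N n. M p q = M q p"
  proof (intro ballI)
    fix p q assume p: "p \<in> patch_idx N n" and q: "q \<in> patch_idx N n"
    obtain I i where pi: "p = (I,i)" by fastforce
    obtain J j where qj: "q = (J,j)" by fastforce
    have IJ: "I \<in> {1..N}" "J \<in> {1..N}" "i \<ge> 1" "j \<ge> 1" using p q pi qj by (auto simp: patch_idx_def)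
    obtain c where k1: "kap I 1 = c" "kap J 1 = c" "kap I (n+1) = c" "kap J (n+1) = c"
      using kk IJ by (metis atLeastAtMost_iff)
    have a1: "m1 I i (J,j) = m2 J j (I,i)" "m2 I i (J,j) = m1 J j (I,i)" "m3 I i (J,j) = m3 J j (I,i)"
      unfolding m1_def m2_def m3_def using IJ by auto
    have a4: "m4 I i (J,j) = m5 J j (I,i)" "m5 I i (J,j) = m4 J j (I,i)"
      unfolding m4_def m5_def using k1 by auto
    show "M p q = M q p" unfolding pi qj M_def using a1 a4 by simp
  qed
  have rep: "patch_rhs N n d H r K kap u p = complex_of_real (\<Sum>q\<in>patch_idx N n. M p q * u q)"
    if p: "p \<in> patch_idx N n" for u p
  proof -
    obtain I i where pi: "p = (I,i)" by fastforce
    have Ii: "I \<in> {1..N}" "i \<ge> 1" "i \<le> n" using p pi by (auto simp: patch_idx_def)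
    define V1 where "V1 = (if i = n then (\<Sum>J=1..N. A I J * u (J,1)) else u (I,i+1))"
    define V0 where "V0 = (if i = 1 then (\<Sum>J=1..N. A J I * u (J,n)) else u (I,i-1))"
    have e1: "patch_val N n H r K u I (i+1) = complex_of_real V1"
      unfolding patch_val_def V1_def using Ii by (simp add: An1)
    have e0: "patch_val N n H r K u I (i-1) = complex_of_real V0"
      unfolding patch_val_def V0_def using Ii by (auto simp: A1n)
    have ei: "patch_val N n H r K u I i = complex_of_real (u (I,i))"
      unfolding patch_val_def using Ii by auto
    have L: "patch_rhs N n d H r K kap u p = complex_of_real
        ((kap I (i+1) * (V1 - u (I,i)) + kap I i * (V0 - u (I,i))) / d\<^sup>2)"
      unfolding patch_rhs_def pi Let_def using e1 e0 ei by (simp add: field_simps)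
    have fin: "finite {1..N}" "finite {1..n}" by auto
    have s1: "(\<Sum>q\<in>patch_idx N n. m1 I i q * u q) = (if i+1 \<le> n then kap I (i+1) * u (I,i+1) else 0)"
      unfolding patch_idx_def m1_def using t1[OF fin, of I "i+1" "kap I (i+1)" u] Ii by auto
    have s2: "(\<Sum>q\<in>patch_idx N n. m2 I i q * u q) = (if i \<ge> 2 then kap I i * u (I,i-1) else 0)"
      unfolding patch_idx_def m2_def using t1[OF fin, of I "i-1" "kap I i" u] Ii by auto
    have s3: "(\<Sum>q\<in>patch_idx N n. m3 I i q * u q) = (kap I (i+1) + kap I i) * u (I,i)"
      unfolding patch_idx_def m3_def using t1[OF fin, of I "i" "kap I (i+1) + kap I i" u] Ii by auto
    have s4: "(\<Sum>q\<in>patch_idx N n. m4 I i q * u q) = (if i = n then (\<Sum>J=1..N. kap I (n+1) * A I J * u (J,1)) else 0)"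
      unfolding patch_idx_def m4_def using t4[OF fin, of "i = n" 1 "\<lambda>J. kap I (n+1) * A I J" u] n1 by auto
    have s5: "(\<Sum>q\<in>patch_idx N n. m5 I i q * u q) = (if i = 1 then (\<Sum>J=1..N. kap I 1 * A J I * u (J,n)) else 0)"
      unfolding patch_idx_def m5_def using t4[OF fin, of "i = 1" n "\<lambda>J. kap I 1 * A J I" u] n1 by auto
    have "(\<Sum>q\<in>patch_idx N n. M p q * u q) = ((\<Sum>q\<in>patch_idx N n. m1 I i q * u q) + (\<Sum>q\<in>patch_idx N n. m2 I i q * u q)
        - (\<Sum>q\<in>patch_idx N n. m3 I i q * u q) + (\<Sum>q\<in>patch_idx N n. m4 I i q * u q) + (\<Sum>q\<in>patch_idx N n. m5 I i q * u q)) / d\<^sup>2"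
      unfolding M_def pi by (simp add: sum.distrib sum_subtractf sum_divide_distrib[symmetric] ring_distribs)
    also have "\<dots> = (kap I (i+1) * (V1 - u (I,i)) + kap I i * (V0 - u (I,i))) / d\<^sup>2"
    proof -
      have a: "(\<Sum>J=1..N. kap I (n+1) * A I J * u (J,1)) = kap I (n+1) * (\<Sum>J=1..N. A I J * u (J,1))"
        by (simp add: sum_distrib_left mult.assoc)
      have b: "(\<Sum>J=1..N. kap I 1 * A J I * u (J,n)) = kap I 1 * (\<Sum>J=1..N. A J I * u (J,n))"
        by (simp add: sum_distrib_left mult.assoc)
      have c: "(if i+1 \<le> n then kap I (i+1) * u (I,i+1) else 0) + (if i = n then kap I (n+1) * (\<Sum>J=1..N. A I J * u (J,1)) else 0)
          = kap I (i+1) * V1" unfolding V1_def using Ii by auto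
      have e: "(if i \<ge> 2 then kap I i * u (I,i-1) else 0) + (if i = 1 then kap I 1 * (\<Sum>J=1..N. A J I * u (J,n)) else 0)
          = kap I i * V0" unfolding V0_def using Ii by auto
      show ?thesis unfolding s1 s2 s3 s4 s5 a b using c e by (simp add: algebra_simps)
    qed
    finally show ?thesis using L by simp
  qed
  show ?thesis using sym rep by blast
qed


theorem lemma1:
  fixes N n :: nat and H d r L h :: real and K :: "real set"
    and kap :: "nat \<Rightarrow> nat \<Rightarrow> real"
  assumes "N \<ge> 1" and "n \<ge> 1" and "H > 0" and "d > 0"
    and "0 < r" and "r \<le> 1"
    and "L = real N * H" and "h = real n * d" and "h = r * H"
    and "finite K"
    and "\<forall>k\<in>K. \<exists>m::int. k = real_of_int m * 2 * pi / L"
    and "\<forall>k\<in>K. - k \<in> K"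
    and "\<forall>I\<in>{1..N}. \<forall>J\<in>{1..N}. kap I 1 = kap J (n + 1)"
  shows "(\<forall>I\<in>{1..N}. \<forall>J\<in>{1..N}.
            Im (interp_n1 N H r K I J) = 0 \<and> Im (interp_1n N H r K I J) = 0 \<and>
            interp_1n N H r K I J = interp_n1 N H r K J I)
       \<and> (\<exists>M :: nat \<times> nat \<Rightarrow> nat \<times> nat \<Rightarrow> real.
            (\<forall>p\<in>patch_idx N n. \<forall>q\<in>patch_idx N n. M p q = M q p) \<and>
            (\<forall>u p. p \<in> patch_idx N n \<longrightarrow>
               patch_rhs N n d H r K kap u p
                 = complex_of_real (\<Sum>q\<in>patch_idx N n. M p q * u q)))"
proof -
  have P: "Im (interp_n1 N H r K I J) = 0" "Im (interp_1n N H r K I J) = 0"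
      "interp_1n N H r K I J = interp_n1 N H r K J I" for I J
    using interp_props[OF assms(12)] by blast+
  have An1: "interp_n1 N H r K I J = complex_of_real (Re (interp_n1 N H r K I J))" for I J
    using P(1)[of I J] by (simp add: complex_eq_iff)
  have A1n: "interp_1n N H r K I J = complex_of_real (Re (interp_n1 N H r K J I))" for I J
    using P(3)[of I J] An1[of J I] by simp
  show ?thesis
    using P part2[OF assms(2) assms(4) assms(13), of H r K "\<lambda>I J. Re (interp_n1 N H r K I J)", OF An1 A1n]
    by blast
qed

end
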